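(* Let $n$ be even, $1\le\kappa<n$ and $d\ge1$. Let $\mathcal{C}_1\subseteq\{0,1\}^n$ be a balanced binary code of length $n$ with minimum Hamming distance $d$ and of maximum size among such codes, and let $\mathcal{C}_2\subseteq\{0,1\}^n$ be a binary $\kappa$-WMU code of length $n$ with minimum Hamming distance $d$. Let $\mathcal{C}=\{\Psi(\mathbf{a},\mathbf{b}):\mathbf{a}\in\mathcal{C}_1,\mathbf{b}\in\mathcal{C}_2\}\subseteq\{\mathtt{A},\mathtt{T},\mathtt{C},\mathtt{G}\}^n$. Then $\mathcal{C}$ is a $\kappa$-WMU code, $\mathcal{C}$ is balanced, and the minimum Hamming distance of $\mathcal{C}$ is at least $d$.
   Context: $\Psi(\mathbf{a},\mathbf{b})=(c_1,\dots,c_n)$ with $c_i=\mathtt{A},\mathtt{T},\mathtt{C},\mathtt{G}$ according as $(a_i,b_i)=(0,0),(0,1),(1,0),(1,1)$. A binary sequence of length $n$ is balanced if exactly $n/2$ entries are $1$; a DNA sequence of length $n$ is balanced if exactly $n/2$ entries lie in $\{\mathtt{G},\mathtt{C}\}$; a code is balanced if every codeword is. A code $\mathcal{C}$ of length $n$ is $\kappa$-WMU if for all not necessarily distinct $\mathbf{a},\mathbf{b}\in\mathcal{C}$ and all $\kappa\le l<n$, $(a_1,\dots,a_l)\ne(b_{n-l+1},\dots,b_n)$. *)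

theory Defs
  imports Main
begin

text \<open>Binary symbols: False = 0, True = 1.\<close>

datatype nuc = NA | NT | NC | NG

definition psi_sym :: "bool \<Rightarrow> bool \<Rightarrow> nuc" where
  "psi_sym x y = (if \<not> x \<and> \<not> y then NA else if \<not> x \<and> y then NT
                  else if x \<and> \<not> y then NC else NG)"

definition Psi :: "bool list \<Rightarrow> bool list \<Rightarrow> nuc list" where
  "Psi a b = map (\<lambda>(x, y). psi_sym x y) (zip a b)"

definition hamming :: "'a list \<Rightarrow> 'a list \<Rightarrow> nat" where
  "hamming x y = card {i. i < length x \<and> x ! i \<noteq> y ! i}"

definition min_dist_ge :: "'a list set \<Rightarrow> nat \<Rightarrow> bool" where
  "min_dist_ge Cd d = (\<forall>x\<in>Cd. \<forall>y\<in>Cd. x \<noteq> y \<longrightarrow> d \<le> hamming x y)"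

definition code_of_length :: "nat \<Rightarrow> 'a list set \<Rightarrow> bool" where
  "code_of_length n Cd = (\<forall>x\<in>Cd. length x = n)"

definition balanced_bin :: "bool list \<Rightarrow> bool" where
  "balanced_bin a = (2 * length (filter id a) = length a)"

definition balanced_dna :: "nuc list \<Rightarrow> bool" where
  "balanced_dna c = (2 * length (filter (\<lambda>s. s \<in> {NG, NC}) c) = length c)"

definition WMU :: "nat \<Rightarrow> nat \<Rightarrow> 'a list set \<Rightarrow> bool" where
  "WMU \<kappa> n Cd = (\<forall>a\<in>Cd. \<forall>b\<in>Cd. \<forall>l. \<kappa> \<le> l \<and> l < n \<longrightarrow> take l a \<noteq> drop (n - l) b)"

end

theory Submission
  imports Defs
begin

lemma psi_inj: "psi_sym x y = psi_sym x' y' \<longleftrightarrow> x = x' \<and> y = y'"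
  by (auto simp: psi_sym_def split: if_splits)

lemma Psi_len: "length (Psi a b) = min (length a) (length b)"
  by (simp add: Psi_def)

lemma Psi_nth: "i < length a \<Longrightarrow> i < length b \<Longrightarrow> Psi a b ! i = psi_sym (a!i) (b!i)"
  by (simp add: Psi_def)

lemma Psi_take: "take l (Psi a b) = Psi (take l a) (take l b)"
  by (simp add: Psi_def take_map take_zip)

lemma Psi_drop: "drop l (Psi a b) = Psi (drop l a) (drop l b)"
  by (simp add: Psi_def drop_map drop_zip)

lemma Psi_eq: assumes "length a = length b" "length a' = length b'" "Psi a b = Psi a' b'"
  shows "a = a' \<and> b = b'"
proof -
  have L: "length a = length a'" using assms Psi_len[of a b] Psi_len[of a' b'] by simp
  have "\<forall>i<length a. a!i = a'!i \<and> b!i = b'!i"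
  proof (intro allI impI)
    fix i assume "i < length a"
    then have "Psi a b ! i = Psi a' b' ! i" using assms by simp
    moreover have "Psi a b ! i = psi_sym (a!i) (b!i)" using \<open>i < length a\<close> assms(1) by (simp add: Psi_nth)
    moreover have "Psi a' b' ! i = psi_sym (a'!i) (b'!i)" using \<open>i < length a\<close> assms(2) L by (simp add: Psi_nth)
    ultimately show "a!i = a'!i \<and> b!i = b'!i" by (simp add: psi_inj)
  qed
  then show ?thesis using L assms by (auto intro: nth_equalityI)
qed

lemma Psi_bal: "length b = length a \<Longrightarrow>
   length (filter (\<lambda>s. s \<in> {NG, NC}) (Psi a b)) = length (filter id a)"
proof (induction a arbitrary: b)
  case Nil then show ?case by (simp add: Psi_def)
next
  case (Cons x a)
  then obtain y b' where "b = y # b'" by (cases b) auto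
  then show ?case using Cons by (simp add: Psi_def psi_sym_def)
qed

lemma ham_sub: assumes "length a = n" "length b = n" "length a' = n" "length b' = n"
  shows "hamming a a' \<le> hamming (Psi a b) (Psi a' b')"
    "hamming b b' \<le> hamming (Psi a b) (Psi a' b')"
proof -
  have S: "{i. i < length a \<and> a!i \<noteq> a'!i} \<subseteq> {i. i < length (Psi a b) \<and> Psi a b ! i \<noteq> Psi a' b' ! i}"
    using assms by (auto simp: Psi_len Psi_nth psi_inj)
  have S2: "{i. i < length b \<and> b!i \<noteq> b'!i} \<subseteq> {i. i < length (Psi a b) \<and> Psi a b ! i \<noteq> Psi a' b' ! i}"
    using assms by (auto simp: Psi_len Psi_nth psi_inj)
  show "hamming a a' \<le> hamming (Psi a b) (Psi a' b')"
    unfolding hamming_def by (rule card_mono[OF _ S]) simp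
  show "hamming b b' \<le> hamming (Psi a b) (Psi a' b')"
    unfolding hamming_def by (rule card_mono[OF _ S2]) simp
qed

theorem lemma6:
  fixes n \<kappa> d :: nat and C1 C2 :: "bool list set"
  assumes "even n" and "1 \<le> \<kappa>" and "\<kappa> < n" and "1 \<le> d"
    and "code_of_length n C1" and "\<forall>a\<in>C1. balanced_bin a" and "min_dist_ge C1 d"
    and "\<forall>C'. code_of_length n C' \<and> (\<forall>a\<in>C'. balanced_bin a) \<and> min_dist_ge C' d
              \<longrightarrow> card C' \<le> card C1"
    and "code_of_length n C2" and "WMU \<kappa> n C2" and "min_dist_ge C2 d"
  shows "WMU \<kappa> n ((\<lambda>(a, b). Psi a b) ` (C1 \<times> C2))
       \<and> (\<forall>c\<in>(\<lambda>(a, b). Psi a b) ` (C1 \<times> C2). balanced_dna c)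
       \<and> min_dist_ge ((\<lambda>(a, b). Psi a b) ` (C1 \<times> C2)) d"
proof (intro conjI)
  have l1: "\<And>a. a \<in> C1 \<Longrightarrow> length a = n" using assms(5) by (simp add: code_of_length_def)
  have l2: "\<And>a. a \<in> C2 \<Longrightarrow> length a = n" using assms(9) by (simp add: code_of_length_def)
  show "WMU \<kappa> n ((\<lambda>(a, b). Psi a b) ` (C1 \<times> C2))"
    unfolding WMU_def
  proof (clarify)
    fix a b a' b' l
    assume h: "a \<in> C1" "b \<in> C2" "a' \<in> C1" "b' \<in> C2" "\<kappa> \<le> l" "l < n"
      "take l (Psi a b) = drop (n - l) (Psi a' b')"
    then have "take l a = drop (n - l) a' \<and> take l b = drop (n - l) b'"
      by (intro Psi_eq) (auto simp: Psi_take Psi_drop l1 l2)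
    then show False using assms(10) h unfolding WMU_def by blast
  qed
  show "\<forall>c\<in>(\<lambda>(a, b). Psi a b) ` (C1 \<times> C2). balanced_dna c"
  proof clarify
    fix a b assume h: "a \<in> C1" "b \<in> C2"
    then show "balanced_dna (Psi a b)"
      using Psi_bal[of b a] assms(6) l1 l2
      by (simp add: balanced_dna_def balanced_bin_def Psi_len)
  qed
  show "min_dist_ge ((\<lambda>(a, b). Psi a b) ` (C1 \<times> C2)) d"
    unfolding min_dist_ge_def
  proof clarify
    fix a b a' b'
    assume h: "a \<in> C1" "b \<in> C2" "a' \<in> C1" "b' \<in> C2" "Psi a b \<noteq> Psi a' b'"
    note hs = ham_sub[OF l1[OF h(1)] l2[OF h(2)] l1[OF h(3)] l2[OF h(4)]]
    show "d \<le> hamming (Psi a b) (Psi a' b')"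
    proof (cases "a = a'")
      case True
      then have "b \<noteq> b'" using h by auto
      then show ?thesis using assms(11) h hs unfolding min_dist_ge_def by (meson le_trans)
    next
      case False
      then show ?thesis using assms(7) h hs unfolding min_dist_ge_def by (meson le_trans)
    qed
  qed
qed

end
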